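(* Consider a graph $G=(V, E)$ that has no isolated vertices and where each node has a $b$-bit identifier. There is a deterministic distributed algorithm in the $\mathsf{CONGEST}$ model that, in $O(\log^* b)$ rounds, colors the vertices of $V$ blue or red such that each color has at most $3|V|/4$ vertices.
   Context: Identifiers are unique. $\mathsf{CONGEST}$ model: synchronous rounds on the network $G$, per round each node sends one message of $O(b)$ bits (the identifier length) to each neighbor; nodes initially know only local information, and at the end each node knows its own color. $\log^*$ denotes the iterated logarithm. *)

theory Defs
  imports Complex_Main
begin

definition log_star :: "nat \<Rightarrow> nat" where
  "log_star b = (LEAST k. ((\<lambda>x::real. log 2 x) ^^ k) (real b) \<le> 1)"

definition simple_graph :: "nat set \<Rightarrow> (nat \<Rightarrow> nat \<Rightarrow> bool) \<Rightarrow> bool" where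
  "simple_graph V E \<longleftrightarrow> finite V \<and> (\<forall>u v. E u v \<longrightarrow> u \<in> V \<and> v \<in> V)
     \<and> (\<forall>u v. E u v \<longrightarrow> E v u) \<and> (\<forall>v. \<not> E v v)"

definition nbrs :: "nat set \<Rightarrow> (nat \<Rightarrow> nat \<Rightarrow> bool) \<Rightarrow> nat \<Rightarrow> nat set" where
  "nbrs V E v = {u \<in> V. E v u}"

definition deg :: "nat set \<Rightarrow> (nat \<Rightarrow> nat \<Rightarrow> bool) \<Rightarrow> nat \<Rightarrow> nat" where
  "deg V E v = card (nbrs V E v)"

definition no_isolated :: "nat set \<Rightarrow> (nat \<Rightarrow> nat \<Rightarrow> bool) \<Rightarrow> bool" where
  "no_isolated V E \<longleftrightarrow> (\<forall>v\<in>V. \<exists>u\<in>V. E v u)"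

definition valid_ids :: "nat set \<Rightarrow> nat \<Rightarrow> (nat \<Rightarrow> nat) \<Rightarrow> bool" where
  "valid_ids V b ident \<longleftrightarrow> inj_on ident V \<and> (\<forall>v\<in>V. ident v < 2 ^ b)"

definition port_numbering ::
  "nat set \<Rightarrow> (nat \<Rightarrow> nat \<Rightarrow> bool) \<Rightarrow> (nat \<Rightarrow> nat \<Rightarrow> nat) \<Rightarrow> bool" where
  "port_numbering V E port \<longleftrightarrow>
     (\<forall>v\<in>V. bij_betw (port v) {..<deg V E v} (nbrs V E v))"

definition back_port ::
  "nat set \<Rightarrow> (nat \<Rightarrow> nat \<Rightarrow> bool) \<Rightarrow> (nat \<Rightarrow> nat \<Rightarrow> nat) \<Rightarrow> nat \<Rightarrow> nat \<Rightarrow> nat" where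
  "back_port V E port u v = (THE j. j < deg V E u \<and> port u j = v)"

text \<open>Local states are arbitrary finite data (encoded as nat lists; local computation
is unrestricted).  Every node initially knows the identifier length b, its own
identifier and its degree.  In each round, a node computes a message (a bit string)
for each of its ports from its state, and then updates its state from its state and
the messages received on each of its ports.  After a_rounds b rounds each node
outputs its colour (True = blue, False = red).\<close>

record algo =
  a_init :: "nat \<Rightarrow> nat \<Rightarrow> nat \<Rightarrow> nat list"
  a_send :: "nat \<Rightarrow> nat list \<Rightarrow> nat \<Rightarrow> bool list"
  a_trans :: "nat \<Rightarrow> nat list \<Rightarrow> (nat \<Rightarrow> bool list) \<Rightarrow> nat list"
  a_out :: "nat list \<Rightarrow> bool"
  a_rounds :: "nat \<Rightarrow> nat"

fun run :: "algo \<Rightarrow> nat set \<Rightarrow> (nat \<Rightarrow> nat \<Rightarrow> bool) \<Rightarrow> nat \<Rightarrow> (nat \<Rightarrow> nat)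
            \<Rightarrow> (nat \<Rightarrow> nat \<Rightarrow> nat) \<Rightarrow> nat \<Rightarrow> nat \<Rightarrow> nat list" where
  "run A V E b ident port 0 v = a_init A b (ident v) (deg V E v)"
| "run A V E b ident port (Suc t) v =
     a_trans A b (run A V E b ident port t v)
       (\<lambda>i. if i < deg V E v then
              a_send A b (run A V E b ident port t (port v i)) (back_port V E port (port v i) v)
            else [])"

definition congest_bandwidth :: "algo \<Rightarrow> nat \<Rightarrow> nat set \<Rightarrow> (nat \<Rightarrow> nat \<Rightarrow> bool)
    \<Rightarrow> nat \<Rightarrow> (nat \<Rightarrow> nat) \<Rightarrow> (nat \<Rightarrow> nat \<Rightarrow> nat) \<Rightarrow> bool" where
  "congest_bandwidth A C V E b ident port \<longleftrightarrow>
     (\<forall>t < a_rounds A b. \<forall>v\<in>V. \<forall>i < deg V E v.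
        length (a_send A b (run A V E b ident port t v) i) \<le> C * b)"

definition output_colour :: "algo \<Rightarrow> nat set \<Rightarrow> (nat \<Rightarrow> nat \<Rightarrow> bool) \<Rightarrow> nat
    \<Rightarrow> (nat \<Rightarrow> nat) \<Rightarrow> (nat \<Rightarrow> nat \<Rightarrow> nat) \<Rightarrow> nat \<Rightarrow> bool" where
  "output_colour A V E b ident port v = a_out A (run A V E b ident port (a_rounds A b) v)"

end

theory Submission
  imports Defs
begin

fun to_bits :: "nat \<Rightarrow> nat \<Rightarrow> bool list" where
  "to_bits 0 n = []"
| "to_bits (Suc w) n = odd n # to_bits w (n div 2)"

fun from_bits :: "bool list \<Rightarrow> nat" where
  "from_bits [] = 0"
| "from_bits (x # xs) = (if x then 1 else 0) + 2 * from_bits xs"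

lemma length_to_bits[simp]: "length (to_bits w n) = w"
  by (induction w arbitrary: n) auto

lemma from_to_bits: "n < 2 ^ w \<Longrightarrow> from_bits (to_bits w n) = n"
proof (induction w arbitrary: n)
  case 0 then show ?case by simp
next
  case (Suc w)
  then have "n div 2 < 2 ^ w" by auto
  with Suc.IH have "from_bits (to_bits w (n div 2)) = n div 2" by simp
  then show ?case by simp
qed

definition cv :: "nat \<Rightarrow> nat \<Rightarrow> nat" where
  "cv a c = (let i = (LEAST i. bit a i \<noteq> bit c i) in 2 * i + (if bit a i then 1 else 0))"

lemma diff_bit_ex: "a \<noteq> (c::nat) \<Longrightarrow> \<exists>i. bit a i \<noteq> bit c i"
  using bit_eq_iff by blast

lemma cv_proper:
  assumes "a \<noteq> c" "c \<noteq> e" shows "cv a c \<noteq> cv c e"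
proof
  assume eq: "cv a c = cv c e"
  define i where "i = (LEAST i. bit a i \<noteq> bit c i)"
  define j where "j = (LEAST i. bit c i \<noteq> bit e i)"
  have hi: "bit a i \<noteq> bit c i" unfolding i_def using diff_bit_ex[OF assms(1)] by (rule LeastI_ex)
  have eq2: "2 * i + (if bit a i then 1 else 0) = 2 * j + (if bit c j then 1 else 0)"
    using eq unfolding cv_def i_def j_def Let_def by simp
  then have "i = j" by (auto split: if_splits; presburger)
  with eq2 hi show False by (auto split: if_splits)
qed

lemma no_bit_above: "(a::nat) < 2 ^ L \<Longrightarrow> L \<le> i \<Longrightarrow> \<not> bit a i"
  by (metis bit_take_bit_iff take_bit_nat_eq_self_iff linorder_not_le)

lemma cv_bound:
  assumes "a \<noteq> c" "a < 2 ^ L" "c < 2 ^ L" shows "cv a c < 2 * L"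
proof -
  define i where "i = (LEAST i. bit a i \<noteq> bit c i)"
  have hi: "bit a i \<noteq> bit c i" unfolding i_def using diff_bit_ex[OF assms(1)] by (rule LeastI_ex)
  have "i < L" using hi no_bit_above[OF assms(2)] no_bit_above[OF assms(3)] by (meson not_le)
  then show ?thesis unfolding cv_def i_def[symmetric] Let_def by simp
qed

lemma rank_parity:
  fixes S :: "nat set"
  assumes "finite S"
  shows "card {i\<in>S. odd (card {j\<in>S. j < i})} = card S div 2"
  using assms
proof (induction S rule: finite_linorder_max_induct)
  case empty then show ?case by simp
next
  case (insert a S)
  have r: "\<And>i. i \<in> S \<Longrightarrow> {j\<in>insert a S. j < i} = {j\<in>S. j < i}" using insert by auto
  have ra: "{j\<in>insert a S. j < a} = S" using insert by auto
  have "{i\<in>insert a S. odd (card {j\<in>insert a S. j < i})} =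
        (if odd (card S) then insert a {i\<in>S. odd (card {j\<in>S. j < i})} else {i\<in>S. odd (card {j\<in>S. j < i})})"
    using r ra insert by auto
  moreover have "a \<notin> S" using insert by auto
  ultimately show ?case using insert by (auto simp: card_insert_if)
qed


definition gstep :: "nat \<Rightarrow> nat" where "gstep L = (LEAST j. 2 * L \<le> 2 ^ j)"

fun Lk :: "nat \<Rightarrow> nat \<Rightarrow> nat" where
  "Lk b 0 = b"
| "Lk b (Suc k) = gstep (Lk b k)"

lemma gstep_spec: "2 * L \<le> 2 ^ gstep L"
  unfolding gstep_def
proof (rule LeastI)
  show "2 * L \<le> 2 ^ (2 * L)" by (metis less_exp less_imp_le_nat)
qed

lemma gstep_le: "2 * L \<le> 2 ^ j \<Longrightarrow> gstep L \<le> j"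
  unfolding gstep_def by (rule Least_le)

lemma gstep_ge1: "L \<ge> 1 \<Longrightarrow> gstep L \<ge> 1"
  using gstep_spec[of L] by (cases "gstep L") auto

lemma log2_pow: "log 2 ((2::real) ^ n) = real n" by (simp add: log_nat_power)
lemma log2_4: "log 2 (4::real) = 2" using log2_pow[of 2] by simp
lemma log2_8: "log 2 (8::real) = 3" using log2_pow[of 3] by simp

lemma gstep_log: assumes "L \<ge> 1" shows "real (gstep L) \<le> log 2 (real L) + 2"
proof -
  define j where "j = gstep L"
  have "j \<ge> 1" using gstep_ge1[OF assms] j_def by simp
  have "\<not> 2 * L \<le> 2 ^ (j - 1)"
  proof
    assume "2 * L \<le> 2 ^ (j - 1)"
    then have "j \<le> j - 1" using gstep_le j_def by blast
    with \<open>j \<ge> 1\<close> show False by simp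
  qed
  then have "2 ^ (j - 1) < 2 * L" by simp
  moreover have "(2::nat) ^ j = 2 * 2 ^ (j - 1)" using \<open>j \<ge> 1\<close> by (cases j) auto
  ultimately have "(2::nat) ^ j < 4 * L" by linarith
  then have "real ((2::nat) ^ j) < real (4 * L)" by linarith
  then have "(2::real) ^ j < 4 * real L" by simp
  then have "log 2 ((2::real) ^ j) < log 2 (4 * real L)"
    using assms by (intro log_less) auto
  also have "log 2 (4 * real L) = 2 + log 2 (real L)"
    using assms by (simp add: log_mult log2_4)
  finally show ?thesis unfolding j_def by (simp add: log_nat_power)
qed

lemma gstep_mono_small:
  "L \<le> 6 \<Longrightarrow> gstep L \<le> 4" "L \<le> 4 \<Longrightarrow> gstep L \<le> 3"
  by (auto intro!: gstep_le)

abbreviation xs :: "nat \<Rightarrow> nat \<Rightarrow> real" where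
  "xs b k \<equiv> ((\<lambda>x::real. log 2 x) ^^ k) (real b)"

lemma xs_Suc: "xs b (Suc k) = log 2 (xs b k)" by simp

lemma nat_le_pow: "m \<le> 2 ^ (m - 1)" for m :: nat
proof (induction m)
  case 0 then show ?case by simp
next
  case (Suc m) then show ?case by (cases m) auto
qed

lemma log_le_pred: assumes "m \<ge> 1" shows "log 2 (real m) \<le> real m - 1"
proof -
  have "real m \<le> 2 powr (real m - 1)"
  proof -
    have "real m \<le> real ((2::nat) ^ (m - 1))" using nat_le_pow[of m] by linarith
    also have "\<dots> = 2 powr (real (m - 1))" by (simp add: powr_realpow)
    finally show ?thesis using assms by (simp add: of_nat_diff)
  qed
  then show ?thesis using assms by (simp add: log_le_iff le_log_iff)
qed

lemma xs_decr: "(\<forall>j<k. xs b j > 1) \<Longrightarrow> xs b k \<le> real (b - k)"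
proof (induction k)
  case 0 then show ?case by simp
next
  case (Suc k)
  have ih: "xs b k \<le> real (b - k)" using Suc by auto
  have gt: "xs b k > 1" using Suc.prems by auto
  then have m1: "b - k \<ge> 1" using ih by linarith
  have "log 2 (xs b k) \<le> log 2 (real (b - k))" using gt ih by (intro log_mono) auto
  also have "\<dots> \<le> real (b - k) - 1" using log_le_pred[OF m1] .
  also have "\<dots> = real (b - Suc k)" using m1 by (simp add: of_nat_diff)
  finally show ?case by simp
qed

lemma logstar_ex: "\<exists>k. xs b k \<le> 1"
proof (cases "\<forall>j<b. xs b j > 1")
  case True
  then have "xs b b \<le> 0" using xs_decr[of b b] by simp
  then show ?thesis by (intro exI[of _ b]) simp
next
  case False then show ?thesis by (auto simp: not_less)
qed

lemma logstar_spec: "xs b (log_star b) \<le> 1"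
  unfolding log_star_def by (rule LeastI_ex[OF logstar_ex])

lemma logstar_min: "k < log_star b \<Longrightarrow> xs b k > 1"
  unfolding log_star_def using not_less_Least by (metis not_le)

lemma Lk_ge1: "b \<ge> 1 \<Longrightarrow> Lk b k \<ge> 1"
proof (induction k)
  case (Suc k) then show ?case using gstep_ge1 by simp
qed simp

lemma Lk_bound: assumes "b \<ge> 1" "k \<le> log_star b" shows "real (Lk b k) \<le> xs b k + 5"
  using assms(2)
proof (induction k)
  case 0 then show ?case by simp
next
  case (Suc k)
  have ih: "real (Lk b k) \<le> xs b k + 5" using Suc by simp
  have gt: "xs b k > 1" using Suc.prems logstar_min by simp
  have "real (Lk b (Suc k)) \<le> log 2 (real (Lk b k)) + 2"
    using gstep_log[OF Lk_ge1[OF assms(1)]] by simp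
  also have "\<dots> \<le> log 2 (xs b k + 5) + 2"
    using ih Lk_ge1[OF assms(1), of k] by (intro add_right_mono log_mono) auto
  also have "\<dots> \<le> log 2 (8 * xs b k) + 2"
    using gt by (intro add_right_mono log_mono) auto
  also have "\<dots> = xs b (Suc k) + 5"
  proof -
    show ?thesis using gt by (simp add: log_mult log2_8)
  qed
  finally show ?case .
qed

lemma Lk_final: assumes "b \<ge> 1" shows "Lk b (log_star b + 2) \<le> 3"
proof -
  have "real (Lk b (log_star b)) \<le> 6" using Lk_bound[OF assms order_refl] logstar_spec[of b] by linarith
  then have "Lk b (log_star b) \<le> 6" by simp
  then have "Lk b (Suc (log_star b)) \<le> 4" using gstep_mono_small(1) by simp
  then have "Lk b (Suc (Suc (log_star b))) \<le> 3" using gstep_mono_small(2) by simp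
  then show ?thesis by simp
qed


definition Rr :: "nat \<Rightarrow> nat" where "Rr b = log_star b + 2"

definition snd_f :: "nat \<Rightarrow> nat list \<Rightarrow> nat \<Rightarrow> bool list" where
 "snd_f b s i = (let t = s!0; c = s!2; m = s!3 in
   if t < Rr b then to_bits b c
   else if t < Rr b + 16 then (if even (t - Rr b) then [i = 0 \<and> m = 0 \<and> c = (t - Rr b) div 2] else [m = i + 2])
   else if t = Rr b + 16 then [i = 0 \<and> m = 0]
   else [odd (card {j \<in> set (drop 4 s). j < i})])"

definition trs_f :: "nat \<Rightarrow> nat list \<Rightarrow> (nat \<Rightarrow> bool list) \<Rightarrow> nat list" where
 "trs_f b s msg = (let t = s!0; d = s!1; c = s!2; m = s!3 in
   if t < Rr b then [Suc t, d, cv c (from_bits (msg 0)), m]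
   else if t < Rr b + 16 then
     (if even (t - Rr b) then [Suc t, d, c, (if m = 0 \<and> c \<noteq> (t - Rr b) div 2 \<and> (\<exists>i<d. msg i = [True]) then (LEAST i. i < d \<and> msg i = [True]) + 2 else m)]
      else [Suc t, d, c, (if m = 0 \<and> c = (t - Rr b) div 2 \<and> msg 0 = [True] then 1 else m)])
   else if t = Rr b + 16 then [Suc t, d, c, m] @ filter (\<lambda>i. msg i = [True]) [0..<d]
   else [Suc t, d, c, m, (if msg 0 = [True] then 1 else 0)])"

definition out_f :: "nat list \<Rightarrow> bool" where
  "out_f s = (if s!3 = 0 then s!4 = 1 else 2 \<le> s!3)"

definition alg :: algo where
  "alg = \<lparr>a_init = (\<lambda>b idv d. [0, d, idv, 0]), a_send = snd_f, a_trans = trs_f,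
          a_out = out_f, a_rounds = (\<lambda>b. Rr b + 18)\<rparr>"

lemma alg_simps[simp]: "a_init alg = (\<lambda>b idv d. [0, d, idv, 0])" "a_send alg = snd_f"
  "a_trans alg = trs_f" "a_out alg = out_f" "a_rounds alg = (\<lambda>b. Rr b + 18)"
  by (simp_all add: alg_def)

lemma snd_len: "b \<ge> 1 \<Longrightarrow> length (snd_f b s i) \<le> 20 * b"
  unfolding snd_f_def Let_def by auto

lemma two_b: "2 * b \<le> (2::nat) ^ b"
  using nat_le_pow[of b] by (cases b) auto

locale G =
  fixes V E b ident port
  assumes sg: "simple_graph V E" and ni: "no_isolated V E" and b1: "b \<ge> 1"
    and ids: "valid_ids V b ident" and pn: "port_numbering V E port"
begin

abbreviation "rn \<equiv> run alg V E b ident port"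
abbreviation "dg \<equiv> deg V E"
abbreviation "bp \<equiv> back_port V E port"
definition par :: "nat \<Rightarrow> nat" where "par v = port v 0"

lemma finV: "finite V" using sg by (simp add: simple_graph_def)
lemma Esym: "E u v \<Longrightarrow> E v u" using sg by (simp add: simple_graph_def)
lemma Ein: "E u v \<Longrightarrow> u \<in> V \<and> v \<in> V" using sg by (simp add: simple_graph_def)
lemma Eirr: "\<not> E v v" using sg by (simp add: simple_graph_def)

lemma bij: "v \<in> V \<Longrightarrow> bij_betw (port v) {..<dg v} (nbrs V E v)"
  using pn by (simp add: port_numbering_def)

lemma port_nb: "v \<in> V \<Longrightarrow> i < dg v \<Longrightarrow> E v (port v i) \<and> port v i \<in> V"
  using bij_betw_apply[OF bij] by (auto simp: nbrs_def)

lemma port_inj: "v \<in> V \<Longrightarrow> i < dg v \<Longrightarrow> j < dg v \<Longrightarrow> port v i = port v j \<Longrightarrow> i = j"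
  using bij_betw_imp_inj_on[OF bij] by (auto dest: inj_onD)

lemma bp_eq: "u \<in> V \<Longrightarrow> j < dg u \<Longrightarrow> port u j = v \<Longrightarrow> bp u v = j"
  unfolding back_port_def using port_inj by (intro the_equality) auto

lemma bp_spec: assumes "u \<in> V" "E u v" shows "bp u v < dg u \<and> port u (bp u v) = v"
proof -
  have "v \<in> nbrs V E u" using assms Ein by (auto simp: nbrs_def)
  then obtain j where "j < dg u" "port u j = v"
    using bij_betw_imp_surj_on[OF bij[OF assms(1)]] by (metis imageE lessThan_iff)
  then show ?thesis using bp_eq assms by simp
qed

lemma dg_pos: assumes "v \<in> V" shows "dg v > 0"
proof -
  obtain u where "u \<in> V" "E v u" using ni assms by (auto simp: no_isolated_def)
  then have "u \<in> nbrs V E v" by (simp add: nbrs_def)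
  moreover have "finite (nbrs V E v)" using finV by (simp add: nbrs_def)
  ultimately show ?thesis by (auto simp: deg_def card_gt_0_iff)
qed

lemma par_in: "v \<in> V \<Longrightarrow> par v \<in> V \<and> E v (par v) \<and> par v \<noteq> v"
  using port_nb[OF _ dg_pos] Eirr unfolding par_def by metis

lemma bp_par: assumes "w \<in> V" "E w v" shows "bp w v = 0 \<longleftrightarrow> par w = v"
  using bp_spec[OF assms] bp_eq[OF assms(1) dg_pos[OF assms(1)]] unfolding par_def by auto

lemma rn_Suc: "rn (Suc t) v = trs_f b (rn t v)
   (\<lambda>i. if i < dg v then snd_f b (rn t (port v i)) (bp (port v i) v) else [])"
  by (simp cong: if_cong)

primrec col :: "nat \<Rightarrow> nat \<Rightarrow> nat" where
  "col 0 v = ident v"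
| "col (Suc k) v = cv (col k v) (col k (par v))"

lemma col_props: "v \<in> V \<Longrightarrow> col k v < 2 ^ b \<and> col k v \<noteq> col k (par v) \<and> col k v < 2 ^ Lk b k"
proof (induction k arbitrary: v)
  case 0
  then show ?case using ids par_in[OF 0] by (auto simp: valid_ids_def dest: inj_onD)
next
  case (Suc k)
  have p: "par v \<in> V" "par (par v) \<in> V" using par_in Suc.prems by auto
  note ih1 = Suc.IH[OF Suc.prems] and ih2 = Suc.IH[OF p(1)]
  have "col (Suc k) v < 2 * b" using cv_bound ih1 ih2 by simp
  then have a: "col (Suc k) v < 2 ^ b" using two_b[of b] by linarith
  have c: "col (Suc k) v \<noteq> col (Suc k) (par v)" using cv_proper ih1 ih2 by simp
  have "col (Suc k) v < 2 * Lk b k" using cv_bound ih1 ih2 by simp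
  then have "col (Suc k) v < 2 ^ Lk b (Suc k)" using gstep_spec[of "Lk b k"] by simp
  with a c show ?case by simp
qed

lemma S1: "t \<le> Rr b \<Longrightarrow> v \<in> V \<Longrightarrow> rn t v = [t, dg v, col t v, 0]"
proof (induction t arbitrary: v)
  case 0 then show ?case by simp
next
  case (Suc t)
  have p: "par v \<in> V" using par_in Suc.prems by auto
  have m0: "snd_f b (rn t (port v 0)) (bp (port v 0) v) = to_bits b (col t (par v))"
    using Suc.IH[OF _ p] Suc.prems unfolding par_def by (simp add: snd_f_def)
  have "from_bits (to_bits b (col t (par v))) = col t (par v)"
    using col_props[OF p] from_to_bits by blast
  then show ?case using Suc.IH[OF _ Suc.prems(2)] Suc.prems m0 dg_pos[OF Suc.prems(2)]
    by (simp add: trs_f_def)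
qed

end

context G begin

abbreviation "colR v \<equiv> col (Rr b) v"

lemma colR_lt8: "v \<in> V \<Longrightarrow> colR v < 8"
proof -
  assume v: "v \<in> V"
  have "colR v < 2 ^ Lk b (Rr b)" using col_props[OF v] by blast
  also have "\<dots> \<le> 2 ^ 3" using Lk_final[OF b1] unfolding Rr_def by (intro power_increasing) auto
  finally show ?thesis by simp
qed

definition cond :: "nat \<Rightarrow> (nat \<Rightarrow> nat) \<Rightarrow> nat \<Rightarrow> nat \<Rightarrow> bool" where
  "cond j m v i = (i < dg v \<and> par (port v i) = v \<and> m (port v i) = 0 \<and> colR (port v i) = j)"

definition mhf :: "(nat \<Rightarrow> nat) \<Rightarrow> nat \<Rightarrow> nat \<Rightarrow> nat" where
  "mhf m j v = (if m v = 0 \<and> colR v \<noteq> j \<and> (\<exists>i. cond j m v i) then (LEAST i. cond j m v i) + 2 else m v)"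

primrec ms :: "nat \<Rightarrow> nat \<Rightarrow> nat" where
  "ms 0 v = 0"
| "ms (Suc j) v = (if ms j v = 0 \<and> colR v = j \<and> mhf (ms j) j (par v) = bp (par v) v + 2 then 1
                   else mhf (ms j) j v)"

lemma trs_prop: "Rr b \<le> t \<Longrightarrow> t < Rr b + 16 \<Longrightarrow> even (t - Rr b) \<Longrightarrow>
  trs_f b [t,d,c,m] msg = [Suc t, d, c, if m = 0 \<and> c \<noteq> (t - Rr b) div 2 \<and> (\<exists>i<d. msg i = [True])
      then (LEAST i. i < d \<and> msg i = [True]) + 2 else m]"
  by (simp add: trs_f_def Let_def)

lemma trs_acc: "Rr b \<le> t \<Longrightarrow> t < Rr b + 16 \<Longrightarrow> odd (t - Rr b) \<Longrightarrow>
  trs_f b [t,d,c,m] msg = [Suc t, d, c, if m = 0 \<and> c = (t - Rr b) div 2 \<and> msg 0 = [True] then 1 else m]"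
  by (simp add: trs_f_def Let_def)

lemma trs_stat: "t = Rr b + 16 \<Longrightarrow>
  trs_f b [t,d,c,m] msg = [Suc t, d, c, m] @ filter (\<lambda>i. msg i = [True]) [0..<d]"
  by (simp add: trs_f_def Let_def)

lemma trs_fin: "t = Rr b + 17 \<Longrightarrow>
  trs_f b (t#d#c#m#rest) msg = [Suc t, d, c, m, if msg 0 = [True] then 1 else 0]"
  by (simp add: trs_f_def Let_def)

lemma snd_prop: "Rr b \<le> t \<Longrightarrow> t < Rr b + 16 \<Longrightarrow> even (t - Rr b) \<Longrightarrow>
  snd_f b [t,d,c,m] i = [i = 0 \<and> m = 0 \<and> c = (t - Rr b) div 2]"
  by (simp add: snd_f_def Let_def)

lemma snd_acc: "Rr b \<le> t \<Longrightarrow> t < Rr b + 16 \<Longrightarrow> odd (t - Rr b) \<Longrightarrow>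
  snd_f b [t,d,c,m] i = [m = i + 2]"
  by (simp add: snd_f_def Let_def)

lemma snd_stat: "t = Rr b + 16 \<Longrightarrow> snd_f b [t,d,c,m] i = [i = 0 \<and> m = 0]"
  by (simp add: snd_f_def Let_def)

lemma snd_fin: "t = Rr b + 17 \<Longrightarrow> snd_f b (t#d#c#m#rest) i = [odd (card {j \<in> set rest. j < i})]"
  by (simp add: snd_f_def Let_def)

lemma S2o:
  assumes j: "j < 8" and hyp: "\<And>w. w \<in> V \<Longrightarrow> rn (Rr b + 2*j) w = [Rr b + 2*j, dg w, colR w, ms j w]"
    and v: "v \<in> V"
  shows "rn (Suc (Rr b + 2*j)) v = [Suc (Rr b + 2*j), dg v, colR v, mhf (ms j) j v]"
proof -
  define msg where "msg = (\<lambda>i. if i < dg v then snd_f b (rn (Rr b + 2*j) (port v i)) (bp (port v i) v) else [])"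
  have M: "msg i = [cond j (ms j) v i]" if "i < dg v" for i
  proof -
    have w: "port v i \<in> V" "E (port v i) v" using port_nb[OF v that] Esym by auto
    show ?thesis using that j hyp[OF w(1)] bp_par[OF w] unfolding msg_def cond_def
      by (simp add: snd_f_def)
  qed
  have L: "(\<lambda>i. i < dg v \<and> msg i = [True]) = cond j (ms j) v"
    using M by (auto simp: cond_def fun_eq_iff)
  have L2: "\<And>i. (i < dg v \<and> msg i = [True]) = cond j (ms j) v i"
    using L by (simp add: fun_eq_iff)
  have E: "(\<exists>i<dg v. msg i = [True]) = (\<exists>i. cond j (ms j) v i)"
    using L2 by blast
  have "rn (Suc (Rr b + 2*j)) v = trs_f b (rn (Rr b + 2*j) v) msg"
    unfolding msg_def by (rule rn_Suc)
  also have "\<dots> = [Suc (Rr b + 2*j), dg v, colR v, mhf (ms j) j v]"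
    unfolding hyp[OF v] using j by (subst trs_prop) (auto simp: E L mhf_def)
  finally show ?thesis .
qed

lemma S2e:
  assumes j: "j < 8" and hyp: "\<And>w. w \<in> V \<Longrightarrow> rn (Rr b + 2*j) w = [Rr b + 2*j, dg w, colR w, ms j w]"
    and v: "v \<in> V"
  shows "rn (Rr b + 2 * Suc j) v = [Rr b + 2 * Suc j, dg v, colR v, ms (Suc j) v]"
proof -
  define msg where "msg = (\<lambda>i. if i < dg v then snd_f b (rn (Suc (Rr b + 2*j)) (port v i)) (bp (port v i) v) else [])"
  have p: "par v \<in> V" "E (par v) v" using par_in[OF v] Esym by auto
  have M: "msg 0 = [mhf (ms j) j (par v) = bp (par v) v + 2]"
    using S2o[OF j hyp p(1)] dg_pos[OF v] j unfolding msg_def par_def[symmetric]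
    by (simp add: snd_f_def)
  have "rn (Rr b + 2 * Suc j) v = rn (Suc (Suc (Rr b + 2*j))) v" by simp
  also have "\<dots> = trs_f b (rn (Suc (Rr b + 2*j)) v) msg"
    unfolding msg_def by (rule rn_Suc)
  also have "\<dots> = [Rr b + 2 * Suc j, dg v, colR v, ms (Suc j) v]"
    using j S2o[OF j hyp v] M unfolding trs_f_def Let_def
    by (simp add: mhf_def)
  finally show ?thesis .
qed

lemma S2: "j \<le> 8 \<Longrightarrow> v \<in> V \<Longrightarrow> rn (Rr b + 2*j) v = [Rr b + 2*j, dg v, colR v, ms j v]"
proof (induction j arbitrary: v)
  case 0 then show ?case using S1 by simp
next
  case (Suc j) then show ?case using S2e[of j] by simp
qed

end

context G begin

declare ms.simps(2)[simp del]

lemma proper: "v \<in> V \<Longrightarrow> colR v \<noteq> colR (par v)"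
  using col_props by blast

lemma mhf_keep: "m v \<noteq> 0 \<Longrightarrow> mhf m j v = m v" by (simp add: mhf_def)

lemma ms_keep: "ms j v \<noteq> 0 \<Longrightarrow> ms (Suc j) v = ms j v" by (simp add: mhf_def ms.simps)

definition minv :: "nat \<Rightarrow> bool" where
  "minv j = (\<forall>v\<in>V. (ms j v = 1 \<longrightarrow> ms j (par v) = bp (par v) v + 2)
     \<and> (\<forall>i. ms j v = i + 2 \<longrightarrow> i < dg v \<and> par (port v i) = v \<and> ms j (port v i) = 1)
     \<and> (ms j v = 0 \<longrightarrow> colR v < j \<longrightarrow> ms j (par v) \<noteq> 0))"

lemma inv_step: assumes I: "minv j" shows "minv (Suc j)"
  unfolding minv_def
proof (intro ballI)
  fix v assume v: "v \<in> V"
  define m where "m = ms j"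
  define h where "h = mhf m j"
  have msS: "ms (Suc j) x = (if m x = 0 \<and> colR x = j \<and> h (par x) = bp (par x) x + 2 then 1 else h x)" for x
    by (simp add: m_def h_def ms.simps)
  have pv: "par v \<in> V" "E (par v) v" using par_in[OF v] Esym by auto
  have Iv: "(m v = 1 \<longrightarrow> m (par v) = bp (par v) v + 2)
     \<and> (\<forall>i. m v = i + 2 \<longrightarrow> i < dg v \<and> par (port v i) = v \<and> m (port v i) = 1)
     \<and> (m v = 0 \<longrightarrow> colR v < j \<longrightarrow> m (par v) \<noteq> 0)" using I v unfolding minv_def m_def by blast
  have keep: "m x \<noteq> 0 \<Longrightarrow> ms (Suc j) x = m x" for x using ms_keep m_def by simp
  show "(ms (Suc j) v = 1 \<longrightarrow> ms (Suc j) (par v) = bp (par v) v + 2)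
     \<and> (\<forall>i. ms (Suc j) v = i + 2 \<longrightarrow> i < dg v \<and> par (port v i) = v \<and> ms (Suc j) (port v i) = 1)
     \<and> (ms (Suc j) v = 0 \<longrightarrow> colR v < Suc j \<longrightarrow> ms (Suc j) (par v) \<noteq> 0)"
  proof (cases "m v = 0")
    case False
    then have e: "ms (Suc j) v = m v" using keep by simp
    have A: "ms (Suc j) v = 1 \<longrightarrow> ms (Suc j) (par v) = bp (par v) v + 2"
    proof
      assume "ms (Suc j) v = 1"
      then have "m (par v) = bp (par v) v + 2" using Iv e by simp
      then show "ms (Suc j) (par v) = bp (par v) v + 2" using keep by simp
    qed
    have B: "\<forall>i. ms (Suc j) v = i + 2 \<longrightarrow> i < dg v \<and> par (port v i) = v \<and> ms (Suc j) (port v i) = 1"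
    proof (intro allI impI)
      fix i assume "ms (Suc j) v = i + 2"
      then have "i < dg v \<and> par (port v i) = v \<and> m (port v i) = 1" using Iv e by simp
      then show "i < dg v \<and> par (port v i) = v \<and> ms (Suc j) (port v i) = 1" using keep by simp
    qed
    show ?thesis using A B e False by simp
  next
    case m0: True
    show ?thesis
    proof (cases "colR v = j")
      case cj: True
      have hv: "h v = 0" using m0 cj by (simp add: h_def mhf_def)
      have cpj: "colR (par v) \<noteq> j" using proper[OF v] cj by simp
      show ?thesis
      proof (cases "h (par v) = bp (par v) v + 2")
        case True
        then have e: "ms (Suc j) v = 1" using msS m0 cj by simp
        have "ms (Suc j) (par v) = h (par v)" using msS cpj by simp
        then show ?thesis using e True by simp
      next
        case False
        then have e: "ms (Suc j) v = 0" using msS m0 cj hv by simp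
        have "ms (Suc j) (par v) \<noteq> 0"
        proof (cases "m (par v) = 0")
          case False then show ?thesis using keep by simp
        next
          case True
          have bs: "bp (par v) v < dg (par v)" "port (par v) (bp (par v) v) = v" using bp_spec[OF pv] by auto
          have "cond j m (par v) (bp (par v) v)" unfolding cond_def using bs m0 cj by simp
          then have "h (par v) \<noteq> 0" using True cpj by (auto simp: h_def mhf_def)
          moreover have "ms (Suc j) (par v) = h (par v)" using msS cpj by simp
          ultimately show ?thesis by simp
        qed
        then show ?thesis using e by simp
      qed
    next
      case cj: False
      have e: "ms (Suc j) v = h v" using msS cj by simp
      show ?thesis
      proof (cases "\<exists>i. cond j m v i")
        case True
        define l where "l = (LEAST i. cond j m v i)"
        have cl: "cond j m v l" unfolding l_def using True by (rule LeastI_ex)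
        have hv: "h v = l + 2" using m0 cj True by (simp add: h_def mhf_def l_def)
        define w where "w = port v l"
        have cw: "l < dg v" "par w = v" "m w = 0" "colR w = j" using cl unfolding cond_def w_def by auto
        have bw: "bp (par w) w = l" using bp_eq[OF v cw(1)] cw(2) w_def by simp
        have "ms (Suc j) w = 1" using msS cw hv bw by simp
        then show ?thesis using e hv cw w_def by auto
      next
        case False
        then have hv: "h v = 0" using m0 by (simp add: h_def mhf_def)
        have "colR v < Suc j \<Longrightarrow> m (par v) \<noteq> 0" using Iv m0 cj by auto
        then show ?thesis using e hv keep by auto
      qed
    qed
  qed
qed

lemma inv_all: "minv j"
proof (induction j)
  case 0 then show ?case by (simp add: minv_def)
next
  case (Suc j) then show ?case by (rule inv_step)
qed

abbreviation "M \<equiv> ms 8"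

definition Fl :: "nat \<Rightarrow> nat set" where
  "Fl u = {i. i < dg u \<and> par (port u i) = u \<and> M (port u i) = 0}"

lemma S3: assumes v: "v \<in> V"
  shows "rn (Rr b + 17) v = [Rr b + 17, dg v, colR v, M v] @ filter (\<lambda>i. par (port v i) = v \<and> M (port v i) = 0) [0..<dg v]"
proof -
  define msg where "msg = (\<lambda>i. if i < dg v then snd_f b (rn (Rr b + 2*8) (port v i)) (bp (port v i) v) else [])"
  have M: "msg i = [par (port v i) = v \<and> M (port v i) = 0]" if "i < dg v" for i
  proof -
    have w: "port v i \<in> V" "E (port v i) v" using port_nb[OF v that] Esym by auto
    show ?thesis using that S2[OF _ w(1), of 8] bp_par[OF w] unfolding msg_def
      by (simp add: snd_stat)
  qed
  have F: "filter (\<lambda>i. msg i = [True]) [0..<dg v] = filter (\<lambda>i. par (port v i) = v \<and> M (port v i) = 0) [0..<dg v]"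
    using M by (intro filter_cong) auto
  have "Rr b + 17 = Suc (Rr b + 2*8)" by simp
  then have "rn (Rr b + 17) v = rn (Suc (Rr b + 2*8)) v" by (simp only:)
  also have "\<dots> = trs_f b (rn (Rr b + 2*8) v) msg" unfolding msg_def by (rule rn_Suc)
  also have "\<dots> = [Rr b + 17, dg v, colR v, M v] @ filter (\<lambda>i. msg i = [True]) [0..<dg v]"
  proof -
    have s2: "rn (Rr b + 2*8) v = [Rr b + 2*8, dg v, colR v, M v]" using S2[OF _ v, of 8] by simp
    show ?thesis unfolding s2 by (subst trs_stat) auto
  qed
  finally show ?thesis using F by simp
qed

lemma S4: assumes v: "v \<in> V"
  shows "rn (Rr b + 18) v = [Rr b + 18, dg v, colR v, M v,
     if odd (card {j \<in> Fl (par v). j < bp (par v) v}) then 1 else 0]"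
proof -
  define msg where "msg = (\<lambda>i. if i < dg v then snd_f b (rn (Rr b + 17) (port v i)) (bp (port v i) v) else [])"
  have pv: "par v \<in> V" using par_in[OF v] by auto
  have st: "set (filter (\<lambda>i. par (port (par v) i) = par v \<and> M (port (par v) i) = 0) [0..<dg (par v)]) = Fl (par v)"
    unfolding Fl_def by auto
  have M: "msg 0 = [odd (card {j \<in> Fl (par v). j < bp (par v) v})]"
    using dg_pos[OF v] unfolding msg_def par_def[symmetric] S3[OF pv]
    by (simp only: if_True append_Cons append_Nil snd_fin st)
  have "Rr b + 18 = Suc (Rr b + 17)" by simp
  then have "rn (Rr b + 18) v = rn (Suc (Rr b + 17)) v" by (simp only:)
  also have "\<dots> = trs_f b (rn (Rr b + 17) v) msg" unfolding msg_def by (rule rn_Suc)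
  also have "\<dots> = [Rr b + 18, dg v, colR v, M v, if msg 0 = [True] then 1 else 0]"
    unfolding S3[OF v] by (simp add: trs_fin)
  finally show ?thesis using M by simp
qed

lemma out_eq: assumes v: "v \<in> V"
  shows "output_colour alg V E b ident port v =
    (if M v = 0 then odd (card {j \<in> Fl (par v). j < bp (par v) v}) else 2 \<le> M v)"
  unfolding output_colour_def using S4[OF v] by (simp add: out_f_def)

end

context G begin

lemma I8: "v \<in> V \<Longrightarrow> (M v = 1 \<longrightarrow> M (par v) = bp (par v) v + 2)
     \<and> (\<forall>i. M v = i + 2 \<longrightarrow> i < dg v \<and> par (port v i) = v \<and> M (port v i) = 1)
     \<and> (M v = 0 \<longrightarrow> M (par v) \<noteq> 0)"
  using inv_all[of 8] colR_lt8 unfolding minv_def by blast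

definition "M1 = {v\<in>V. M v = 1}"
definition "M2 = {v\<in>V. 2 \<le> M v}"
definition "Mt = {v\<in>V. M v \<noteq> 0}"
definition "rkodd u i = odd (card {j\<in>Fl u. j < i})"
definition "Bl = {v\<in>V. output_colour alg V E b ident port v}"
definition "Rd = {v\<in>V. \<not> output_colour alg V E b ident port v}"

lemma Fl_sub: "Fl u \<subseteq> {..<dg u}" unfolding Fl_def by auto
lemma Fl_fin: "finite (Fl u)" using Fl_sub finite_subset by blast

lemma port_inj_on: "u \<in> V \<Longrightarrow> inj_on (port u) (Fl u)"
  using bij_betw_imp_inj_on[OF bij] Fl_sub inj_on_subset by blast

lemma Fl_elem: assumes u: "u \<in> V" and i: "i \<in> Fl u"
  shows "port u i \<in> V \<and> par (port u i) = u \<and> M (port u i) = 0 \<and> bp u (port u i) = i"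
  using i port_nb[OF u] bp_eq[OF u] unfolding Fl_def by auto

lemma out_Fl: assumes u: "u \<in> V" and i: "i \<in> Fl u"
  shows "output_colour alg V E b ident port (port u i) = rkodd u i"
  using Fl_elem[OF u i] out_eq[of "port u i"] unfolding rkodd_def by simp

lemma unm_cover: assumes v: "v \<in> V" "M v = 0"
  shows "par v \<in> Mt \<and> bp (par v) v \<in> Fl (par v) \<and> v = port (par v) (bp (par v) v)"
proof -
  have pv: "par v \<in> V" "E (par v) v" using par_in[OF v(1)] Esym by auto
  have "M (par v) \<noteq> 0" using I8[OF v(1)] v by simp
  then show ?thesis using bp_spec[OF pv] pv v unfolding Mt_def Fl_def by auto
qed

lemma card_M1_M2: "card M1 \<le> card M2"
proof (rule card_inj_on_le)
  show "inj_on par M1"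
  proof
    fix x y assume x: "x \<in> M1" and y: "y \<in> M1" and e: "par x = par y"
    have "M (par x) = bp (par x) x + 2" "M (par y) = bp (par y) y + 2"
      using I8 x y unfolding M1_def by auto
    then have "bp (par x) x = bp (par x) y" using e by simp
    moreover have "port (par x) (bp (par x) x) = x" "port (par y) (bp (par y) y) = y"
      using bp_spec par_in Esym x y unfolding M1_def by auto
    ultimately show "x = y" using e by metis
  qed
  show "par ` M1 \<subseteq> M2" using I8 par_in unfolding M1_def M2_def by fastforce
  show "finite M2" using finV unfolding M2_def by simp
qed

lemma card_M2_M1: "card M2 \<le> card M1"
proof (rule card_inj_on_le)
  define f where "f y = port y (M y - 2)" for y
  have fy: "y \<in> M2 \<Longrightarrow> f y \<in> V \<and> par (f y) = y \<and> M (f y) = 1" for y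
  proof -
    assume y: "y \<in> M2"
    then have "2 \<le> M y" unfolding M2_def by simp
    then have "M y = (M y - 2) + 2" by simp
    then have "M y - 2 < dg y \<and> par (f y) = y \<and> M (f y) = 1" using I8[of y] y unfolding M2_def f_def by blast
    then show ?thesis using port_nb y unfolding M2_def f_def by auto
  qed
  show "inj_on f M2" by (metis fy inj_onI)
  show "f ` M2 \<subseteq> M1" using fy unfolding M1_def by auto
  show "finite M1" using finV unfolding M1_def by simp
qed

lemma Mt_split: "card Mt = card M1 + card M2"
proof -
  have "Mt = M1 \<union> M2" "M1 \<inter> M2 = {}" unfolding Mt_def M1_def M2_def by auto
  moreover have "finite M1" "finite M2" using finV unfolding M1_def M2_def by auto
  ultimately show ?thesis by (simp add: card_Un_disjoint)
qed

lemma finMt: "finite Mt" using finV unfolding Mt_def by simp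

lemma cardV: "card V \<le> card Mt + (\<Sum>u\<in>Mt. card (Fl u))"
proof -
  have "V \<subseteq> Mt \<union> (\<Union>u\<in>Mt. port u ` Fl u)"
  proof
    fix v assume v: "v \<in> V"
    show "v \<in> Mt \<union> (\<Union>u\<in>Mt. port u ` Fl u)"
    proof (cases "M v = 0")
      case True then show ?thesis using unm_cover[OF v True] by blast
    next
      case False then show ?thesis using v unfolding Mt_def by blast
    qed
  qed
  then have "card V \<le> card (Mt \<union> (\<Union>u\<in>Mt. port u ` Fl u))"
    using finMt Fl_fin by (intro card_mono) auto
  also have "\<dots> \<le> card Mt + card (\<Union>u\<in>Mt. port u ` Fl u)" by (rule card_Un_le)
  also have "card (\<Union>u\<in>Mt. port u ` Fl u) \<le> (\<Sum>u\<in>Mt. card (port u ` Fl u))" by (rule card_UN_le[OF finMt])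
  also have "\<dots> \<le> (\<Sum>u\<in>Mt. card (Fl u))" by (intro sum_mono card_image_le Fl_fin)
  finally show ?thesis by simp
qed

lemma card_part:
  assumes P: "\<And>u. u \<in> Mt \<Longrightarrow> A u \<subseteq> Fl u" and D: "D \<subseteq> Mt"
  shows "card (D \<union> (\<Union>u\<in>Mt. port u ` A u)) = card D + (\<Sum>u\<in>Mt. card (A u))"
proof -
  have fin: "finite (port u ` A u)" if "u \<in> Mt" for u using Fl_fin P[OF that] finite_subset by blast
  have d1: "D \<inter> (\<Union>u\<in>Mt. port u ` A u) = {}" using D P Fl_elem unfolding Mt_def by fastforce
  have "card (\<Union>u\<in>Mt. port u ` A u) = (\<Sum>u\<in>Mt. card (port u ` A u))"
  proof (rule card_UN_disjoint[OF finMt])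
    show "\<forall>u\<in>Mt. finite (port u ` A u)" using fin by blast
    show "\<forall>u\<in>Mt. \<forall>u'\<in>Mt. u \<noteq> u' \<longrightarrow> port u ` A u \<inter> port u' ` A u' = {}"
    proof (intro ballI impI)
      fix u u' assume u: "u \<in> Mt" and u': "u' \<in> Mt" and ne: "u \<noteq> u'"
      show "port u ` A u \<inter> port u' ` A u' = {}"
      proof (rule ccontr)
        assume "port u ` A u \<inter> port u' ` A u' \<noteq> {}"
        then obtain i i' where i: "i \<in> A u" "i' \<in> A u'" "port u i = port u' i'" by blast
        have "par (port u i) = u" using Fl_elem u P[OF u] i(1) unfolding Mt_def by blast
        moreover have "par (port u' i') = u'" using Fl_elem u' P[OF u'] i(2) unfolding Mt_def by blast
        ultimately show False using ne i(3) by simp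
      qed
    qed
  qed
  also have "\<dots> = (\<Sum>u\<in>Mt. card (A u))"
    using P port_inj_on unfolding Mt_def by (intro sum.cong refl card_image) (auto intro: inj_on_subset)
  finally have "card (\<Union>u\<in>Mt. port u ` A u) = (\<Sum>u\<in>Mt. card (A u))" .
  moreover have "finite D" using D finMt finite_subset by blast
  ultimately show ?thesis using d1 fin finMt by (simp add: card_Un_disjoint)
qed

lemma cardB: "card M2 + (\<Sum>u\<in>Mt. card (Fl u) div 2) \<le> card Bl"
proof -
  let ?A = "\<lambda>u. {i\<in>Fl u. rkodd u i}"
  have "card M2 + (\<Sum>u\<in>Mt. card (?A u)) = card (M2 \<union> (\<Union>u\<in>Mt. port u ` ?A u))"
    by (rule card_part[symmetric]) (auto simp: M2_def Mt_def)
  also have "\<dots> \<le> card Bl"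
  proof (rule card_mono)
    show "finite Bl" using finV unfolding Bl_def by simp
    show "M2 \<union> (\<Union>u\<in>Mt. port u ` ?A u) \<subseteq> Bl"
      using out_Fl Fl_elem out_eq unfolding Bl_def M2_def Mt_def by fastforce
  qed
  finally show ?thesis using rank_parity[OF Fl_fin] unfolding rkodd_def by simp
qed

lemma even_count: "card {i\<in>Fl u. \<not> rkodd u i} = card (Fl u) - card (Fl u) div 2"
proof -
  have "card (Fl u) = card {i\<in>Fl u. rkodd u i} + card {i\<in>Fl u. \<not> rkodd u i}"
    using Fl_fin by (subst card_Un_disjoint[symmetric]) (auto intro: arg_cong[where f=card])
  then show ?thesis using rank_parity[OF Fl_fin] unfolding rkodd_def by simp
qed

lemma cardR: "card M1 + (\<Sum>u\<in>Mt. card (Fl u) - card (Fl u) div 2) \<le> card Rd"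
proof -
  let ?A = "\<lambda>u. {i\<in>Fl u. \<not> rkodd u i}"
  have "card M1 + (\<Sum>u\<in>Mt. card (?A u)) = card (M1 \<union> (\<Union>u\<in>Mt. port u ` ?A u))"
    by (rule card_part[symmetric]) (auto simp: M1_def Mt_def)
  also have "\<dots> \<le> card Rd"
  proof (rule card_mono)
    show "finite Rd" using finV unfolding Rd_def by simp
    show "M1 \<union> (\<Union>u\<in>Mt. port u ` ?A u) \<subseteq> Rd"
      using out_Fl Fl_elem out_eq unfolding Rd_def M1_def Mt_def by fastforce
  qed
  finally show ?thesis using even_count by simp
qed

lemma VBR: "card V = card Bl + card Rd"
proof -
  have "V = Bl \<union> Rd" "Bl \<inter> Rd = {}" unfolding Bl_def Rd_def by auto
  moreover have "finite Bl" "finite Rd" using finV unfolding Bl_def Rd_def by auto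
  ultimately show ?thesis using card_Un_disjoint by metis
qed

lemma final: "4 * card Bl \<le> 3 * card V \<and> 4 * card Rd \<le> 3 * card V"
proof -
  define S where "S = (\<Sum>u\<in>Mt. card (Fl u))"
  define Sd where "Sd = (\<Sum>u\<in>Mt. card (Fl u) div 2)"
  define Se where "Se = (\<Sum>u\<in>Mt. card (Fl u) - card (Fl u) div 2)"
  have s1: "S \<le> 4 * Sd + card Mt"
  proof -
    have "S \<le> (\<Sum>u\<in>Mt. 4 * (card (Fl u) div 2) + 1)" unfolding S_def by (intro sum_mono) auto
    also have "\<dots> = (\<Sum>u\<in>Mt. 4 * (card (Fl u) div 2)) + (\<Sum>u\<in>Mt. 1)" by (rule sum.distrib)
    also have "\<dots> = 4 * Sd + card Mt" unfolding Sd_def by (simp add: sum_distrib_left)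
    finally show ?thesis .
  qed
  have s2: "S \<le> 2 * Se"
  proof -
    have "S \<le> (\<Sum>u\<in>Mt. 2 * (card (Fl u) - card (Fl u) div 2))" unfolding S_def by (intro sum_mono) auto
    also have "\<dots> = 2 * Se" unfolding Se_def by (simp add: sum_distrib_left)
    finally show ?thesis .
  qed
  have cv: "card V \<le> card Mt + S" using cardV S_def by simp
  have cb: "card M2 + Sd \<le> card Bl" using cardB Sd_def by simp
  have cr: "card M1 + Se \<le> card Rd" using cardR Se_def by simp
  show ?thesis using cv cb cr s1 s2 Mt_split card_M1_M2 card_M2_M1 VBR by linarith
qed

end

theorem lemma3p1:
  shows "\<exists>(A::algo) (C::nat).
     (\<forall>b\<ge>1. a_rounds A b \<le> C * log_star b + C) \<and>
     (\<forall>V E b ident port.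
        simple_graph V E \<and> no_isolated V E \<and> b \<ge> 1 \<and> valid_ids V b ident
        \<and> port_numbering V E port \<longrightarrow>
          congest_bandwidth A C V E b ident port \<and>
          4 * card {v\<in>V. output_colour A V E b ident port v} \<le> 3 * card V \<and>
          4 * card {v\<in>V. \<not> output_colour A V E b ident port v} \<le> 3 * card V)"
proof (intro exI conjI allI impI)
  show "a_rounds alg b \<le> 20 * log_star b + 20" if "b \<ge> 1" for b by (simp add: Rr_def)
next
  fix V E b ident port
  assume h: "simple_graph V E \<and> no_isolated V E \<and> b \<ge> 1 \<and> valid_ids V b ident \<and> port_numbering V E port"
  then interpret G V E b ident port by unfold_locales auto
  show "congest_bandwidth alg 20 V E b ident port"
    unfolding congest_bandwidth_def using snd_len b1 by simp
  show "4 * card {v\<in>V. output_colour alg V E b ident port v} \<le> 3 * card V"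
    using final unfolding Bl_def by simp
  show "4 * card {v\<in>V. \<not> output_colour alg V E b ident port v} \<le> 3 * card V"
    using final unfolding Rd_def by simp
qed


end
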